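(* Let $n\ge2$, $0<\rho<\sigma<\infty$ and $v\in L^1(B_\sigma)$. Define $$J(\rho,\sigma,v):=\inf\Big\{\int_{B_\sigma}|v||\nabla\eta|^2\,dx\;:\;\eta\in C^1_0(B_\sigma),\ \eta\ge0,\ \eta=1\text{ in }B_\rho\Big\}.$$ Then for every $\delta\in(0,1]$, $$J(\rho,\sigma,v)\le(\sigma-\rho)^{-(1+\frac1\delta)}\Big(\int_\rho^\sigma\Big(\int_{S_r}|v|\Big)^\delta dr\Big)^{\frac1\delta}.$$
   Context: $B_r$ denotes the open ball of radius $r$ centered at the origin in $\mathbb R^n$, $S_r=\partial B_r$ the sphere of radius $r$ centered at the origin, and $\int_{S_r}|v|$ denotes the integral of $|v|$ over $S_r$ with respect to the $(n-1)$-dimensional surface measure (defined for a.e. $r$). *)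

theory Defs
  imports "HOL-Analysis.Analysis"
begin

definition C1_0 :: "'a::euclidean_space set \<Rightarrow> ('a \<Rightarrow> real) set" where
  "C1_0 B = {\<eta>. (\<exists>g. (\<forall>x. (\<eta> has_derivative (\<lambda>h. g x \<bullet> h)) (at x)) \<and> continuous_on UNIV g)
               \<and> compact (closure {x. \<eta> x \<noteq> 0}) \<and> closure {x. \<eta> x \<noteq> 0} \<subseteq> B}"

definition grad :: "('a::euclidean_space \<Rightarrow> real) \<Rightarrow> 'a \<Rightarrow> 'a" where
  "grad \<eta> x = (SOME g. (\<eta> has_derivative (\<lambda>h. g \<bullet> h)) (at x))"

definition J :: "real \<Rightarrow> real \<Rightarrow> ('a::euclidean_space \<Rightarrow> real) \<Rightarrow> real" where
  "J \<rho> \<sigma> v = Inf {(\<integral>x\<in>ball 0 \<sigma>. \<bar>v x\<bar> * (norm (grad \<eta> x))\<^sup>2 \<partial>lebesgue) | \<eta>.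
        \<eta> \<in> C1_0 (ball 0 \<sigma>) \<and> (\<forall>x. \<eta> x \<ge> 0) \<and> (\<forall>x\<in>ball 0 \<rho>. \<eta> x = 1)}"

text \<open>Integral of |v| over the sphere S_r w.r.t. the (n-1)-dimensional surface measure,
  using the cone (polar-coordinate) description of the surface measure:
  int_{S_r} g = r^(n-1) int_{S^(n-1)} g(r w) dw = (n/r) int_{B_r} g(r x/|x|) dx.\<close>
definition sphere_int_abs :: "('a::euclidean_space \<Rightarrow> real) \<Rightarrow> real \<Rightarrow> real" where
  "sphere_int_abs v r =
     (real DIM('a) / r) * (\<integral>x\<in>ball 0 r. \<bar>v ((r / norm x) *\<^sub>R x)\<bar> \<partial>lebesgue)"

end

theory Submission
  imports Defs
begin
lemma young_aux:
  fixes u l d :: real assumes u: "u>0" and l: "l>0" and d: "d>0"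
  shows "1 + d \<le> l * u powr d + d * (l powr (-1/d)) / u"
proof -
  define a where "a = (l * u powr d) powr (1/(1+d))"
  define b where "b = (l * u powr d) powr (-1/(1+d))"
  have p: "1 + d > 1" "(1+d)/d > 1" "1/(1+d) + 1/((1+d)/d) = 1" using d by (auto simp: field_simps)
  have lu: "l * u powr d > 0" using u l by simp
  have ab: "a * b = 1" unfolding a_def b_def using lu u l by (simp add: powr_add[symmetric])
  have ap: "a powr (1+d) = l * u powr d" unfolding a_def using u l d by (simp add: powr_powr)
  have bq: "b powr ((1+d)/d) = l powr (-1/d) / u"
  proof -
    have "b powr ((1+d)/d) = (l * u powr d) powr (-1/d)" unfolding b_def using lu d by (simp add: powr_powr)
    also have "\<dots> = l powr (-1/d) * u powr (-1)" using u l d by (simp add: powr_mult powr_powr)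
    finally show ?thesis using u by (simp add: powr_minus_divide divide_inverse powr_minus)
  qed
  have "a * b \<le> a powr (1+d) / (1+d) + b powr ((1+d)/d) / ((1+d)/d)"
    by (rule Youngs_inequality[OF p]) (auto simp: a_def b_def)
  hence "1 \<le> l * u powr d / (1+d) + (l powr (-1/d) / u) * d / (1+d)"
    using ab ap bq by simp
  then have "(1+d) * 1 \<le> (1+d) * (l * u powr d / (1+d) + (l powr (-1/d) / u) * d / (1+d))"
    using d by (intro mult_left_mono) auto
  also have "\<dots> = l * u powr d + d * (l powr (-1/d) / u)"
  proof -
    have "(1+d) * (X/(1+d) + Z * d/(1+d)) = X + d*Z" for X Z :: real
    proof -
      have nz: "1 + d \<noteq> 0" using d by simp
      show ?thesis using nz by (simp add: add_divide_distrib[symmetric] mult.commute)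
    qed
    thus ?thesis by blast
  qed
  finally show ?thesis by simp
qed

lemma set_integral_pos_Icc:
  fixes f :: "real \<Rightarrow> real"
  assumes "\<rho> < \<sigma>" "\<forall>x\<in>{\<rho>..\<sigma>}. f x > 0" "set_integrable lborel {\<rho>..\<sigma>} f"
  shows "(LINT x:{\<rho>..\<sigma>}|lborel. f x) > 0"
proof (rule ccontr)
  assume "\<not> ?thesis"
  moreover have "(LINT x:{\<rho>..\<sigma>}|lborel. f x) \<ge> 0" using assms unfolding set_lebesgue_integral_def
    by (intro integral_nonneg_AE) (auto simp: indicator_def less_imp_le)
  ultimately have "(LINT x:{\<rho>..\<sigma>}|lborel. f x) = 0" by simp
  then have "AE x in lborel. indicator {\<rho>..\<sigma>} x * f x = 0"
    using integral_nonneg_eq_0_iff_AE[of lborel "\<lambda>x. indicator {\<rho>..\<sigma>} x * f x"] assms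
    unfolding set_lebesgue_integral_def set_integrable_def by (auto simp: indicator_def less_imp_le)
  then have "AE x in lborel. x \<notin> {\<rho>..\<sigma>}"
    by eventually_elim (use assms in \<open>force simp: indicator_def\<close>)
  then have "{\<rho>..\<sigma>} \<in> null_sets lborel" by (subst AE_iff_null_sets) auto
  then show False using assms by auto
qed

lemma exp_alg:
  fixes a b d :: real assumes d: "d > 0"
  shows "exp (d/(1+d)*(b-a)) * exp a = exp ((a + d*b)/(1+d))"
    and "exp (-1/d * (d/(1+d)*(b-a))) * exp b = exp ((a + d*b)/(1+d))"
    and "exp ((1+1/d) * ((a + d*b)/(1+d))) = exp (1/d * a) * exp b"
proof -
  have nz: "1 + d \<noteq> 0" "d \<noteq> 0" "d + d*d \<noteq> 0" "d * (1+d) \<noteq> 0" using d by (smt (verit) mult_pos_pos)+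
  show "exp (d/(1+d)*(b-a)) * exp a = exp ((a + d*b)/(1+d))"
    unfolding exp_add[symmetric] using nz by (simp add: field_simps)
  show "exp (-1/d * (d/(1+d)*(b-a))) * exp b = exp ((a + d*b)/(1+d))"
    unfolding exp_add[symmetric] using nz by (simp add: field_simps)
  show "exp ((1+1/d) * ((a + d*b)/(1+d))) = exp (1/d * a) * exp b"
    unfolding exp_add[symmetric] using nz by (simp add: field_simps)
qed

lemma holder_like:
  fixes u :: "real \<Rightarrow> real" and \<rho> \<sigma> d :: real
  assumes rs: "\<rho> < \<sigma>" and d: "0 < d" and upos: "\<forall>x\<in>{\<rho>..\<sigma>}. u x > 0"
    and iA: "set_integrable lborel {\<rho>..\<sigma>} (\<lambda>x. u x powr d)"
    and iB: "set_integrable lborel {\<rho>..\<sigma>} (\<lambda>x. 1 / u x)"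
  shows "(\<sigma>-\<rho>) powr (1 + 1/d) \<le> (LINT x:{\<rho>..\<sigma>}|lborel. u x powr d) powr (1/d) * (LINT x:{\<rho>..\<sigma>}|lborel. 1 / u x)"
proof -
  define A where "A = (LINT x:{\<rho>..\<sigma>}|lborel. u x powr d)"
  define B where "B = (LINT x:{\<rho>..\<sigma>}|lborel. 1 / u x)"
  have Apos: "A > 0" unfolding A_def using rs upos iA by (intro set_integral_pos_Icc) auto
  have Bpos: "B > 0" unfolding B_def using rs upos iB by (intro set_integral_pos_Icc) auto
  have key: "(1+d) * (\<sigma>-\<rho>) \<le> l * A + d * l powr (-1/d) * B" if l: "l > 0" for l
  proof -
    have i1: "set_integrable lborel {\<rho>..\<sigma>} (\<lambda>x. l * u x powr d)"
      by (intro set_integrable_mult_right) (rule iA)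
    have i2: "set_integrable lborel {\<rho>..\<sigma>} (\<lambda>x. (d * l powr (-1/d)) * (1 / u x))"
      by (intro set_integrable_mult_right) (rule iB)
    have "(1+d) * (\<sigma>-\<rho>) = (LINT x:{\<rho>..\<sigma>}|lborel. 1 + d)"
      using rs by (simp add: set_integral_const measure_lborel_Icc)
    also have "\<dots> \<le> (LINT x:{\<rho>..\<sigma>}|lborel. l * u x powr d + d * (l powr (-1/d)) * (1 / u x))"
    proof (rule set_integral_mono)
      show "set_integrable lborel {\<rho>..\<sigma>} (\<lambda>x. 1 + d)"
        using rs by (simp add: set_integrable_def integrable_indicator_iff emeasure_lborel_Icc)
      show "set_integrable lborel {\<rho>..\<sigma>} (\<lambda>x. l * u x powr d + d * l powr (- 1 / d) * (1 / u x))"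
        by (rule set_integral_add(1)[OF i1 i2])
      show "1 + d \<le> l * u x powr d + d * l powr (- 1 / d) * (1 / u x)" if "x \<in> {\<rho>..\<sigma>}" for x
        using young_aux[of "u x" l d] upos that l d by simp
    qed
    also have "\<dots> = (LINT x:{\<rho>..\<sigma>}|lborel. l * u x powr d) + (LINT x:{\<rho>..\<sigma>}|lborel. (d * l powr (-1/d)) * (1 / u x))"
      by (rule set_integral_add(2)[OF i1 i2])
    also have "\<dots> = l * A + d * l powr (-1/d) * B"
      unfolding A_def B_def set_integral_mult_right ..
    finally show ?thesis .
  qed
  define a where "a = ln A"
  define b where "b = ln B"
  have Ae: "A = exp a" and Be: "B = exp b" using Apos Bpos by (auto simp: a_def b_def)
  define l where "l = exp (d/(1+d)*(b-a))"
  define P where "P = exp ((a + d*b)/(1+d))"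
  have "(1+d) * (\<sigma>-\<rho>) \<le> l * A + d * l powr (-1/d) * B" using key[of l] by (simp add: l_def)
  also have "l * A = P" unfolding l_def P_def Ae using exp_alg(1)[OF d] by simp
  also have "d * l powr (-1/d) * B = d * P" unfolding l_def P_def Be using exp_alg(2)[OF d]
    by (simp add: powr_def)
  finally have "(1+d) * (\<sigma>-\<rho>) \<le> (1+d) * P" by (simp add: algebra_simps)
  hence LP: "\<sigma>-\<rho> \<le> P" using d by simp
  have "(\<sigma>-\<rho>) powr (1 + 1/d) \<le> P powr (1 + 1/d)"
    using LP rs d by (intro powr_mono2) auto
  also have "\<dots> = A powr (1/d) * B"
    unfolding P_def Ae Be using exp_alg(3)[OF d] by (simp add: powr_def)
  finally show ?thesis unfolding A_def B_def .
qed

lemma powr_subadd: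
  fixes x y d :: real assumes "x \<ge> 0" "y \<ge> 0" "0 < d" "d \<le> 1"
  shows "(x + y) powr d \<le> x powr d + y powr d"
proof (cases "x + y = 0")
  case True
  then have "x = 0" "y = 0" using assms by auto
  then show ?thesis by simp
next
  case False
  define s where "s = x + y"
  have s: "s > 0" using False assms by (simp add: s_def)
  have "x / s \<le> (x / s) powr d"
    using powr_mono'[of d 1 "x/s"] assms s by (simp add: s_def)
  moreover have "y / s \<le> (y / s) powr d"
    using powr_mono'[of d 1 "y/s"] assms s by (simp add: s_def)
  ultimately have "s powr d * (x / s + y / s) \<le> s powr d * ((x/s) powr d + (y/s) powr d)"
    by (intro mult_left_mono) auto
  also have "\<dots> = x powr d + y powr d"
    using s assms by (simp add: powr_divide distrib_left)
  also have "x / s + y / s = 1" using s by (simp add: s_def add_divide_distrib[symmetric])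
  finally show ?thesis by (simp add: s_def)
qed

lemma powr_le_1_plus:
  fixes x d :: real assumes "x \<ge> 0" "0 < d" "d \<le> 1"
  shows "x powr d \<le> 1 + x"
proof (cases "x \<le> 1")
  case True
  then have "x powr d \<le> 1" using assms by (intro powr_le1) auto
  then show ?thesis using assms by simp
next
  case False
  then have "x powr d \<le> x powr 1" using assms by (intro powr_mono) auto
  then show ?thesis using False by simp
qed

lemma oneD_stepB:
  fixes S :: "real \<Rightarrow> real" and \<rho> \<sigma> \<delta> \<eta> :: real
  assumes rs: "\<rho> < \<sigma>" and d: "0<\<delta>" "\<delta> \<le> 1" and eta: "\<eta> > 0"
    and Smeas: "S \<in> borel_measurable borel"
    and Snn: "\<forall>x\<in>{\<rho>..\<sigma>}. S x \<ge> 0"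
    and Sint: "set_integrable lborel {\<rho>..\<sigma>} S"
  shows "1 / (LINT x:{\<rho>..\<sigma>}|lborel. 1 / (S x + \<eta>)) \<le>
         (\<sigma>-\<rho>) powr (-(1+1/\<delta>)) * ((LINT r:{\<rho>..\<sigma>}|lborel. S r powr \<delta>) + (\<sigma>-\<rho>) * \<eta> powr \<delta>) powr (1/\<delta>)"
proof -
  let ?I = "{\<rho>..\<sigma>}"
  have iconst: "set_integrable lborel ?I (\<lambda>x. c)" for c :: real
    using rs by (simp add: set_integrable_def integrable_indicator_iff emeasure_lborel_Icc)
  have iS1: "set_integrable lborel ?I (\<lambda>x. (1 + \<eta>) + S x)"
    by (rule set_integral_add(1)[OF iconst Sint])
  have iSd: "set_integrable lborel ?I (\<lambda>x. S x powr \<delta>)"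
  proof (rule set_integrable_bound[OF iS1])
    show "set_borel_measurable lborel ?I (\<lambda>x. S x powr \<delta>)"
      unfolding set_borel_measurable_def using Smeas by measurable
    show "AE x in lborel. x \<in> ?I \<longrightarrow> norm (S x powr \<delta>) \<le> norm ((1 + \<eta>) + S x)"
    proof (intro AE_I2 impI)
      fix x assume "x \<in> ?I" then have "S x \<ge> 0" using Snn by auto
      then show "norm (S x powr \<delta>) \<le> norm ((1 + \<eta>) + S x)"
        using powr_le_1_plus[of "S x" \<delta>] d eta by simp
    qed
  qed
  have iSed: "set_integrable lborel ?I (\<lambda>x. (S x + \<eta>) powr \<delta>)"
  proof (rule set_integrable_bound[OF iS1])
    show "set_borel_measurable lborel ?I (\<lambda>x. (S x + \<eta>) powr \<delta>)"
      unfolding set_borel_measurable_def using Smeas by measurable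
    show "AE x in lborel. x \<in> ?I \<longrightarrow> norm ((S x + \<eta>) powr \<delta>) \<le> norm ((1 + \<eta>) + S x)"
    proof (intro AE_I2 impI)
      fix x assume "x \<in> ?I" then have "S x \<ge> 0" using Snn by auto
      then show "norm ((S x + \<eta>) powr \<delta>) \<le> norm ((1 + \<eta>) + S x)"
        using powr_le_1_plus[of "S x + \<eta>" \<delta>] d eta by simp
    qed
  qed
  have iinv: "set_integrable lborel ?I (\<lambda>x. 1 / (S x + \<eta>))"
  proof (rule set_integrable_bound[OF iconst[of "1/\<eta>"]])
    show "set_borel_measurable lborel ?I (\<lambda>x. 1 / (S x + \<eta>))"
      unfolding set_borel_measurable_def using Smeas by measurable
    show "AE x in lborel. x \<in> ?I \<longrightarrow> norm (1 / (S x + \<eta>)) \<le> norm (1 / \<eta>)"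
      using Snn eta by (intro AE_I2) (auto simp: frac_le)
  qed
  define Ae where "Ae = (LINT x:?I|lborel. (S x + \<eta>) powr \<delta>)"
  define A where "A = (LINT x:?I|lborel. S x powr \<delta>)"
  define B where "B = (LINT x:?I|lborel. 1 / (S x + \<eta>))"
  have Bpos: "B > 0" unfolding B_def using rs iinv Snn eta
    by (intro set_integral_pos_Icc) (auto simp: add_nonneg_pos)
  have Aenn: "Ae \<ge> 0" unfolding Ae_def set_lebesgue_integral_def
    by (intro integral_nonneg_AE) auto
  have hol: "(\<sigma>-\<rho>) powr (1 + 1/\<delta>) \<le> Ae powr (1/\<delta>) * B"
    unfolding Ae_def B_def using rs d iSed iinv Snn eta
    by (intro holder_like) (auto simp: add_nonneg_pos)
  have AeA: "Ae \<le> A + (\<sigma>-\<rho>) * \<eta> powr \<delta>"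
  proof -
    have "Ae \<le> (LINT x:?I|lborel. S x powr \<delta> + \<eta> powr \<delta>)"
      unfolding Ae_def
      by (rule set_integral_mono[OF iSed set_integral_add(1)[OF iSd iconst]])
         (use Snn d eta in \<open>auto intro!: powr_subadd\<close>)
    also have "\<dots> = A + (\<sigma>-\<rho>) * \<eta> powr \<delta>"
      unfolding A_def using rs by (simp add: set_integral_add(2)[OF iSd iconst] set_integral_const)
    finally show ?thesis .
  qed
  have Lpos: "(\<sigma>-\<rho>) powr (1 + 1/\<delta>) > 0" using rs by simp
  have "1 / B \<le> Ae powr (1/\<delta>) / (\<sigma>-\<rho>) powr (1 + 1/\<delta>)"
    using hol Bpos Lpos by (simp add: field_simps)
  also have "\<dots> \<le> (A + (\<sigma>-\<rho>) * \<eta> powr \<delta>) powr (1/\<delta>) / (\<sigma>-\<rho>) powr (1 + 1/\<delta>)"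
    using AeA Aenn Lpos d by (intro divide_right_mono powr_mono2) auto
  also have "\<dots> = inverse ((\<sigma>-\<rho>) powr (1+1/\<delta>)) * (A + (\<sigma>-\<rho>) * \<eta> powr \<delta>) powr (1/\<delta>)"
    by (simp add: divide_inverse mult.commute)
  also have "inverse ((\<sigma>-\<rho>) powr (1+1/\<delta>)) = (\<sigma>-\<rho>) powr (-(1+1/\<delta>))"
    by (rule powr_minus[symmetric])
  finally show ?thesis unfolding A_def B_def .
qed

lemma oneD_stepA:
  fixes S :: "real \<Rightarrow> real" and \<rho> \<sigma> \<eta> j :: real
  assumes rs: "\<rho> < \<sigma>" and eta: "\<eta> > 0"
    and Smeas: "S \<in> borel_measurable borel"
    and Snn: "\<forall>x\<in>{\<rho>..\<sigma>}. S x \<ge> 0"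
    and Sint: "set_integrable lborel {\<rho>..\<sigma>} S"
    and H: "\<And>k a b. continuous_on UNIV k \<Longrightarrow> (\<forall>x. 0 \<le> k x) \<Longrightarrow> (\<forall>x. x \<notin> {a..b} \<longrightarrow> k x = 0)
       \<Longrightarrow> \<rho> < a \<Longrightarrow> b < \<sigma> \<Longrightarrow> 0 < (LINT x:{\<rho>..\<sigma>}|lborel. k x)
       \<Longrightarrow> j \<le> (LINT x:{\<rho>..\<sigma>}|lborel. (k x)\<^sup>2 * S x) / (LINT x:{\<rho>..\<sigma>}|lborel. k x)\<^sup>2"
  shows "j \<le> 1 / (LINT x:{\<rho>..\<sigma>}|lborel. 1 / (S x + \<eta>))"
proof -
  let ?I = "{\<rho>..\<sigma>}"
  define St where "St x = indicator ?I x * S x" for x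
  have St_int: "integrable lborel St"
    using Sint unfolding set_integrable_def St_def by simp
  have St_hk: "St integrable_on UNIV"
    using has_integral_integral_lborel[OF St_int] by blast
  have St_cbox: "St integrable_on cbox a b" for a b
    using integrable_on_subcbox[OF St_hk] by simp
  obtain N where Nneg: "negligible N" and
    Nlim: "\<And>x e. x \<notin> N \<Longrightarrow> 0 < e \<Longrightarrow> \<exists>d>0. \<forall>h. 0 < h \<and> h < d \<longrightarrow>
              norm (integral (cbox x (x + h *\<^sub>R One)) St /\<^sub>R h ^ DIM(real) - St x) < e"
    using integrable_ccontinuous_explicit[OF St_cbox] by blast
  have Nlim': "\<exists>d>0. \<forall>h. 0 < h \<and> h < d \<longrightarrow> \<bar>integral {x..x+h} St / h - St x\<bar> < e"
    if "x \<notin> N" "0 < e" for x e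
    using Nlim[OF that] by (simp add: cbox_interval divide_inverse mult.commute)
  have AEN: "AE x in lborel. x \<notin> N"
  proof -
    have "N \<in> null_sets lebesgue" using Nneg negligible_iff_null_sets by blast
    then have "AE x in lebesgue. x \<notin> N" by (rule AE_not_in)
    then show ?thesis by (simp add: AE_completion_iff)
  qed
  define F where "F t = integral {\<rho>..max \<rho> (min t \<sigma>)} St" for t
  have Fcont: "continuous_on UNIV F"
  proof -
    have "continuous_on ?I (\<lambda>t. integral {\<rho>..t} St)"
      by (rule indefinite_integral_continuous_1) (use St_cbox[of \<rho> \<sigma>] in \<open>simp add: cbox_interval\<close>)
    moreover have "continuous_on UNIV (\<lambda>t. max \<rho> (min t \<sigma>))"
      by (intro continuous_intros)
    moreover have "(\<lambda>t. max \<rho> (min t \<sigma>)) ` UNIV \<subseteq> ?I" using rs by auto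
    ultimately show ?thesis unfolding F_def by (rule continuous_on_compose2)
  qed
  have Fdiff: "F r' - F r = integral {r..r'} St" if "\<rho> \<le> r" "r \<le> r'" "r' \<le> \<sigma>" for r r'
  proof -
    have "F r = integral {\<rho>..r} St" "F r' = integral {\<rho>..r'} St"
      using that by (auto simp: F_def max_def min_def)
    moreover have "integral {\<rho>..r} St + integral {r..r'} St = integral {\<rho>..r'} St"
      by (rule Henstock_Kurzweil_Integration.integral_combine) (use that St_cbox[of \<rho> r'] in \<open>auto simp: cbox_interval\<close>)
    ultimately show ?thesis by simp
  qed
  define h where "h m = 1 / (real m + 1)" for m :: nat
  have hpos: "h m > 0" for m by (simp add: h_def)
  have h0: "h \<longlonglongrightarrow> 0"
  proof -
    have "h = (\<lambda>m. inverse (real (Suc m)))" by (simp add: fun_eq_iff h_def inverse_eq_divide)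
    then show ?thesis using LIMSEQ_inverse_real_of_nat by simp
  qed
  define Sm where "Sm m r = (F (r + h m) - F r) / h m" for m r
  define chi where "chi m r = max 0 (min 1 ((real m + 1) * min (r - \<rho>) (\<sigma> - r) - 1))" for m :: nat and r
  define k where "k m r = chi m r / (max (Sm m r) 0 + \<eta>)" for m r
  have Smcont: "continuous_on UNIV (Sm m)" for m
  proof -
    have "continuous_on UNIV (\<lambda>r. F (r + h m))"
      by (rule continuous_on_compose2[OF Fcont]) (auto intro!: continuous_intros)
    then show ?thesis unfolding Sm_def using Fcont hpos[of m] by (auto intro!: continuous_intros)
  qed
  have kcont: "continuous_on UNIV (k m)" for m
    unfolding k_def chi_def using Smcont[of m] eta
    by (intro continuous_intros) (auto simp: add_nonneg_pos)
  have chi01: "0 \<le> chi m r" "chi m r \<le> 1" for m r by (auto simp: chi_def)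
  have den: "max (Sm m r) 0 + \<eta> \<ge> \<eta>" for m r by simp
  have knn: "0 \<le> k m r" for m r unfolding k_def using chi01 eta den[of m r] by simp
  have kle: "k m r \<le> 1 / \<eta>" for m r
  proof -
    have "k m r \<le> 1 / (max (Sm m r) 0 + \<eta>)" unfolding k_def using chi01[of m r] eta den[of m r]
      by (intro divide_right_mono) auto
    also have "\<dots> \<le> 1 / \<eta>" using eta by (intro divide_left_mono) auto
    finally show ?thesis .
  qed
  have ksupp: "k m r = 0" if "r \<notin> {\<rho> + h m .. \<sigma> - h m}" for m r
  proof -
    have "min (r - \<rho>) (\<sigma> - r) < h m" using that by auto
    then have "(real m + 1) * min (r - \<rho>) (\<sigma> - r) < 1" by (simp add: h_def field_simps)
    then show ?thesis by (simp add: k_def chi_def)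
  qed
  have klim: "(\<lambda>m. k m x) \<longlonglongrightarrow> 1 / (S x + \<eta>)" if x: "x \<in> {\<rho><..<\<sigma>}" "x \<notin> N" for x
  proof -
    have chi1: "(\<lambda>m. chi m x) \<longlonglongrightarrow> 1"
    proof (rule tendsto_eventually)
      define c where "c = min (x - \<rho>) (\<sigma> - x)"
      have c: "c > 0" using x by (auto simp: c_def)
      obtain M :: nat where M: "2 / c < real M" using reals_Archimedean2 by blast
      show "\<forall>\<^sub>F m in sequentially. chi m x = 1"
      proof (rule eventually_sequentiallyI[of M])
        fix m assume "M \<le> m"
        then have "2 / c < real m + 1" using M by linarith
        then have "2 < (real m + 1) * c" using c by (simp add: field_simps)
        then show "chi m x = 1" by (simp add: chi_def c_def)
      qed
    qed
    have Smlim: "(\<lambda>m. Sm m x) \<longlonglongrightarrow> S x"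
    proof (rule tendstoI)
      fix e :: real assume e: "e > 0"
      obtain d where d: "d > 0" and dP: "\<And>hh. 0 < hh \<and> hh < d \<Longrightarrow> \<bar>integral {x..x+hh} St / hh - St x\<bar> < e"
        using Nlim'[OF x(2) e] by blast
      have "\<forall>\<^sub>F m in sequentially. h m < min d (\<sigma> - x)"
        using order_tendstoD(2)[OF h0, of "min d (\<sigma> - x)"] d x by auto
      then show "\<forall>\<^sub>F m in sequentially. dist (Sm m x) (S x) < e"
      proof eventually_elim
        case (elim m)
        have "Sm m x = integral {x..x + h m} St / h m"
          unfolding Sm_def using x elim hpos[of m] by (subst Fdiff) auto
        moreover have "St x = S x" using x by (simp add: St_def)
        ultimately show ?case using dP[of "h m"] elim hpos[of m] by (simp add: dist_real_def)
      qed
    qed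
    have Sx: "S x \<ge> 0" using x Snn by auto
    have "(\<lambda>m. chi m x / (max (Sm m x) 0 + \<eta>)) \<longlonglongrightarrow> 1 / (max (S x) 0 + \<eta>)"
      using eta Sx by (intro tendsto_intros chi1 Smlim) auto
    then show ?thesis using Sx unfolding k_def by simp
  qed
  have iconst: "integrable lborel (\<lambda>x. indicator ?I x * c)" for c :: real
    using rs by (intro integrable_mult_left) (simp add: integrable_indicator_iff less_imp_le)
  have iS: "integrable lborel (\<lambda>x. indicator ?I x * S x)"
    using Sint unfolding set_integrable_def by simp
  have kmeas: "k m \<in> borel_measurable borel" for m
    using kcont[of m] by (rule borel_measurable_continuous_onI)
  have AEconv: "AE x in lborel. (\<lambda>m. indicator ?I x * k m x) \<longlonglongrightarrow> indicator ?I x * (1/(S x + \<eta>)) \<and>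
     (\<lambda>m. indicator ?I x * ((k m x)\<^sup>2 * S x)) \<longlonglongrightarrow> indicator ?I x * ((1/(S x + \<eta>))\<^sup>2 * S x)"
    using AEN AE_lborel_singleton[of \<rho>] AE_lborel_singleton[of \<sigma>]
  proof eventually_elim
    case (elim x)
    show ?case
    proof (cases "x \<in> ?I")
      case True
      then have "x \<in> {\<rho><..<\<sigma>}" using elim by auto
      from klim[OF this elim(1)] have "(\<lambda>m. k m x) \<longlonglongrightarrow> 1 / (S x + \<eta>)" .
      then show ?thesis using True by (auto intro!: tendsto_intros)
    next
      case False
      then show ?thesis by simp
    qed
  qed
  define D where "D m = (LINT x:?I|lborel. k m x)" for m
  define Nm where "Nm m = (LINT x:?I|lborel. (k m x)\<^sup>2 * S x)" for m
  define Ds where "Ds = (LINT x:?I|lborel. 1/(S x + \<eta>))"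
  define Ns where "Ns = (LINT x:?I|lborel. (1/(S x + \<eta>))\<^sup>2 * S x)"
  have DL: "D \<longlonglongrightarrow> Ds"
    unfolding D_def Ds_def set_lebesgue_integral_def
  proof (rule integral_dominated_convergence[where w="\<lambda>x. indicator ?I x * (1/\<eta>)"])
    show "(\<lambda>x. indicator ?I x *\<^sub>R (1 / (S x + \<eta>))) \<in> borel_measurable lborel"
      using Smeas by measurable
    show "(\<lambda>x. indicator ?I x *\<^sub>R k m x) \<in> borel_measurable lborel" for m
      using kmeas[of m] by measurable
    show "integrable lborel (\<lambda>x. indicator ?I x * (1/\<eta>))" by (rule iconst)
    show "AE x in lborel. (\<lambda>m. indicator ?I x *\<^sub>R k m x) \<longlonglongrightarrow> indicator ?I x *\<^sub>R (1 / (S x + \<eta>))"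
      using AEconv by eventually_elim simp
    show "AE x in lborel. norm (indicator ?I x *\<^sub>R k m x) \<le> indicator ?I x * (1/\<eta>)" for m
      using knn[of m] kle[of m] by (intro AE_I2) (auto simp: indicator_def)
  qed
  have NL: "Nm \<longlonglongrightarrow> Ns"
    unfolding Nm_def Ns_def set_lebesgue_integral_def
  proof (rule integral_dominated_convergence[where w="\<lambda>x. (1/\<eta>)\<^sup>2 * (indicator ?I x * S x)"])
    show "(\<lambda>x. indicator ?I x *\<^sub>R ((1 / (S x + \<eta>))\<^sup>2 * S x)) \<in> borel_measurable lborel"
      using Smeas by measurable
    show "(\<lambda>x. indicator ?I x *\<^sub>R ((k m x)\<^sup>2 * S x)) \<in> borel_measurable lborel" for m
      using kmeas[of m] Smeas by measurable
    show "integrable lborel (\<lambda>x. (1/\<eta>)\<^sup>2 * (indicator ?I x * S x))" using iS by simp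
    show "AE x in lborel. (\<lambda>m. indicator ?I x *\<^sub>R ((k m x)\<^sup>2 * S x)) \<longlonglongrightarrow> indicator ?I x *\<^sub>R ((1 / (S x + \<eta>))\<^sup>2 * S x)"
      using AEconv by eventually_elim simp
    show "AE x in lborel. norm (indicator ?I x *\<^sub>R ((k m x)\<^sup>2 * S x)) \<le> (1/\<eta>)\<^sup>2 * (indicator ?I x * S x)" for m
    proof (intro AE_I2)
      fix x show "norm (indicator ?I x *\<^sub>R ((k m x)\<^sup>2 * S x)) \<le> (1/\<eta>)\<^sup>2 * (indicator ?I x * S x)"
      proof (cases "x \<in> ?I")
        case True
        then have Sx: "S x \<ge> 0" using Snn by auto
        have "(k m x)\<^sup>2 \<le> (1/\<eta>)\<^sup>2" using knn[of m x] kle[of m x] by (intro power_mono) auto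
        then have "(k m x)\<^sup>2 * S x \<le> (1/\<eta>)\<^sup>2 * S x" using Sx by (intro mult_right_mono) auto
        then show ?thesis using True Sx by (simp add: abs_of_nonneg)
      qed simp
    qed
  qed
  have iinv: "set_integrable lborel ?I (\<lambda>x. 1 / (S x + \<eta>))"
  proof (rule set_integrable_bound[where f="\<lambda>x. 1/\<eta>"])
    show "set_integrable lborel ?I (\<lambda>x. 1/\<eta>)" using iconst[of "1/\<eta>"] unfolding set_integrable_def by simp
    show "set_borel_measurable lborel ?I (\<lambda>x. 1 / (S x + \<eta>))"
      unfolding set_borel_measurable_def using Smeas by measurable
    show "AE x in lborel. x \<in> ?I \<longrightarrow> norm (1 / (S x + \<eta>)) \<le> norm (1 / \<eta>)"
      using Snn eta by (intro AE_I2) (auto simp: frac_le)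
  qed
  have Dspos: "Ds > 0" unfolding Ds_def using rs iinv Snn eta
    by (intro set_integral_pos_Icc) (auto simp: add_nonneg_pos)
  have ev: "\<forall>\<^sub>F m in sequentially. j \<le> Nm m / (D m)\<^sup>2"
    using order_tendstoD(1)[OF DL Dspos]
  proof eventually_elim
    case (elim m)
    show ?case unfolding Nm_def D_def
    proof (rule H[of "k m" "\<rho> + h m" "\<sigma> - h m"])
      show "continuous_on UNIV (k m)" by (rule kcont)
      show "\<forall>x. 0 \<le> k m x" using knn by blast
      show "\<forall>x. x \<notin> {\<rho> + h m..\<sigma> - h m} \<longrightarrow> k m x = 0" using ksupp by blast
      show "\<rho> < \<rho> + h m" "\<sigma> - h m < \<sigma>" using hpos[of m] by auto
      show "0 < (LINT x:?I|lborel. k m x)" using elim unfolding D_def .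
    qed
  qed
  have "(\<lambda>m. Nm m / (D m)\<^sup>2) \<longlonglongrightarrow> Ns / Ds\<^sup>2"
    using Dspos by (intro tendsto_intros NL DL) auto
  then have jle: "j \<le> Ns / Ds\<^sup>2"
    by (rule tendsto_lowerbound[OF _ ev]) simp
  have iN: "set_integrable lborel ?I (\<lambda>x. (1/(S x + \<eta>))\<^sup>2 * S x)"
  proof (rule set_integrable_bound[where f="\<lambda>x. (1/\<eta>)\<^sup>2 * S x"])
    show "set_integrable lborel ?I (\<lambda>x. (1/\<eta>)\<^sup>2 * S x)" using Sint by (intro set_integrable_mult_right)
    show "set_borel_measurable lborel ?I (\<lambda>x. (1/(S x + \<eta>))\<^sup>2 * S x)"
      unfolding set_borel_measurable_def using Smeas by measurable
    show "AE x in lborel. x \<in> ?I \<longrightarrow> norm ((1/(S x + \<eta>))\<^sup>2 * S x) \<le> norm ((1/\<eta>)\<^sup>2 * S x)"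
    proof (intro AE_I2 impI)
      fix x assume "x \<in> ?I" then have Sx: "S x \<ge> 0" using Snn by auto
      have "(1/(S x + \<eta>))\<^sup>2 \<le> (1/\<eta>)\<^sup>2" using Sx eta by (intro power_mono) (auto simp: frac_le)
      then have "(1/(S x + \<eta>))\<^sup>2 * S x \<le> (1/\<eta>)\<^sup>2 * S x" using Sx by (intro mult_right_mono) auto
      then show "norm ((1/(S x + \<eta>))\<^sup>2 * S x) \<le> norm ((1/\<eta>)\<^sup>2 * S x)" using Sx by (simp add: abs_of_nonneg)
    qed
  qed
  have NsDs: "Ns \<le> Ds"
    unfolding Ns_def Ds_def
  proof (rule set_integral_mono[OF iN iinv])
    fix x assume "x \<in> ?I" then have Sx: "S x \<ge> 0" using Snn by auto
    have "S x / (S x + \<eta>) \<le> 1" using Sx eta by simp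
    then have "(1/(S x + \<eta>)) * (S x / (S x + \<eta>)) \<le> (1/(S x + \<eta>)) * 1"
      using Sx eta by (intro mult_left_mono) auto
    then show "(1/(S x + \<eta>))\<^sup>2 * S x \<le> 1/(S x + \<eta>)" by (simp add: power2_eq_square)
  qed
  have "Ns / Ds\<^sup>2 \<le> Ds / Ds\<^sup>2" using NsDs Dspos by (intro divide_right_mono) auto
  also have "\<dots> = 1 / Ds" using Dspos by (simp add: power2_eq_square)
  finally show ?thesis using jle unfolding Ds_def by simp
qed

lemma oneD:
  fixes S :: "real \<Rightarrow> real" and \<rho> \<sigma> \<delta> j :: real
  assumes rs: "\<rho> < \<sigma>" and d: "0<\<delta>" "\<delta> \<le> 1"
    and Smeas: "S \<in> borel_measurable borel"
    and Snn: "\<forall>x\<in>{\<rho>..\<sigma>}. S x \<ge> 0"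
    and Sint: "set_integrable lborel {\<rho>..\<sigma>} S"
    and H: "\<And>k a b. continuous_on UNIV k \<Longrightarrow> (\<forall>x. 0 \<le> k x) \<Longrightarrow> (\<forall>x. x \<notin> {a..b} \<longrightarrow> k x = 0)
       \<Longrightarrow> \<rho> < a \<Longrightarrow> b < \<sigma> \<Longrightarrow> 0 < (LINT x:{\<rho>..\<sigma>}|lborel. k x)
       \<Longrightarrow> j \<le> (LINT x:{\<rho>..\<sigma>}|lborel. (k x)\<^sup>2 * S x) / (LINT x:{\<rho>..\<sigma>}|lborel. k x)\<^sup>2"
  shows "j \<le> (\<sigma> - \<rho>) powr (-(1 + 1/\<delta>)) * (LINT r:{\<rho>..\<sigma>}|lborel. S r powr \<delta>) powr (1/\<delta>)"
proof -
  define A where "A = (LINT r:{\<rho>..\<sigma>}|lborel. S r powr \<delta>)"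
  define f where "f \<eta> = (\<sigma>-\<rho>) powr (-(1+1/\<delta>)) * (A + (\<sigma>-\<rho>) * \<eta> powr \<delta>) powr (1/\<delta>)" for \<eta>
  have le: "j \<le> f \<eta>" if "\<eta> > 0" for \<eta>
  proof -
    have "j \<le> 1 / (LINT x:{\<rho>..\<sigma>}|lborel. 1 / (S x + \<eta>))"
      using H by (rule oneD_stepA[OF rs that Smeas Snn Sint])
    then show ?thesis using oneD_stepB[OF rs d that Smeas Snn Sint]
      unfolding f_def A_def by linarith
  qed
  have A0: "A \<ge> 0" unfolding A_def set_lebesgue_integral_def
    by (intro integral_nonneg_AE) auto
  have lim: "(f \<longlongrightarrow> (\<sigma>-\<rho>) powr (-(1+1/\<delta>)) * (A + (\<sigma>-\<rho>) * 0 powr \<delta>) powr (1/\<delta>)) (at_right 0)"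
  proof -
    have e0: "\<forall>\<^sub>F x in at_right (0::real). 0 \<le> x"
      by (simp add: eventually_at_right_field) (meson less_imp_le zero_less_one)
    have p0: "((\<lambda>x::real. x powr \<delta>) \<longlongrightarrow> 0) (at_right 0)"
      by (rule tendsto_zero_powrI[OF tendsto_ident_at tendsto_const e0 d(1)])
    have "((\<lambda>x. A + (\<sigma>-\<rho>) * x powr \<delta>) \<longlongrightarrow> A + (\<sigma>-\<rho>) * 0) (at_right 0)"
      by (intro tendsto_intros p0)
    then have "((\<lambda>x. (A + (\<sigma>-\<rho>) * x powr \<delta>) powr (1/\<delta>)) \<longlongrightarrow> (A + (\<sigma>-\<rho>) * 0) powr (1/\<delta>)) (at_right 0)"
      using d A0 rs by (intro tendsto_powr') (auto intro!: always_eventually)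
    then have "((\<lambda>x. (\<sigma>-\<rho>) powr (-(1+1/\<delta>)) * (A + (\<sigma>-\<rho>) * x powr \<delta>) powr (1/\<delta>)) \<longlongrightarrow>
       (\<sigma>-\<rho>) powr (-(1+1/\<delta>)) * (A + (\<sigma>-\<rho>) * 0) powr (1/\<delta>)) (at_right 0)"
      by (rule tendsto_mult[OF tendsto_const])
    then show ?thesis using d by (simp add: f_def[abs_def])
  qed
  have "j \<le> (\<sigma>-\<rho>) powr (-(1+1/\<delta>)) * (A + (\<sigma>-\<rho>) * 0 powr \<delta>) powr (1/\<delta>)"
  proof (rule tendsto_lowerbound[OF lim])
    show "\<forall>\<^sub>F x in at_right 0. j \<le> f x"
      unfolding eventually_at_right_field using le by (intro exI[of _ 1]) auto
  qed simp
  then show ?thesis unfolding A_def by simp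
qed

lemma pred_ball[measurable (raw)]:
  fixes f :: "'b \<Rightarrow> 'a::euclidean_space"
  assumes "f \<in> M \<rightarrow>\<^sub>M borel" "g \<in> borel_measurable M"
  shows "Measurable.pred M (\<lambda>x. f x \<in> ball 0 (g x))"
  unfolding mem_ball_0 using assms by measurable

lemma nn_integral_scale:
  fixes f :: "'a::euclidean_space \<Rightarrow> ennreal" and c :: real
  assumes f: "f \<in> borel_measurable borel" and c: "c > 0"
  shows "(\<integral>\<^sup>+x. f x \<partial>lborel) = ennreal (c ^ DIM('a)) * (\<integral>\<^sup>+y. f (c *\<^sub>R y) \<partial>lborel)"
proof -
  have "(\<integral>\<^sup>+x. f x \<partial>lborel) = (\<integral>\<^sup>+x. f x \<partial>density (distr lborel borel (\<lambda>x. 0 + c *\<^sub>R x)) (\<lambda>_. \<bar>c\<bar>^DIM('a)))"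
    using lborel_affine[of c "0::'a"] c by simp
  also have "\<dots> = (\<integral>\<^sup>+x. ennreal (\<bar>c\<bar>^DIM('a)) * f x \<partial>distr lborel borel (\<lambda>x. 0 + c *\<^sub>R x))"
    using f by (subst nn_integral_density) auto
  also have "\<dots> = (\<integral>\<^sup>+y. ennreal (\<bar>c\<bar>^DIM('a)) * f (0 + c *\<^sub>R y) \<partial>lborel)"
    using f by (subst nn_integral_distr) auto
  also have "\<dots> = ennreal (c ^ DIM('a)) * (\<integral>\<^sup>+y. f (c *\<^sub>R y) \<partial>lborel)"
    using c f by (subst nn_integral_cmult) auto
  finally show ?thesis .
qed

lemma test_fubini:
  fixes f :: "real \<Rightarrow> 'a::euclidean_space \<Rightarrow> ennreal"
  assumes "case_prod f \<in> borel_measurable (lborel \<Otimes>\<^sub>M lborel)"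
  shows "(\<integral>\<^sup>+y. (\<integral>\<^sup>+x. f x y \<partial>lborel) \<partial>lborel) = (\<integral>\<^sup>+x. (\<integral>\<^sup>+y. f x y \<partial>lborel) \<partial>lborel)"
  by (rule lborel_pair.Fubini'[OF assms])

lemma polar_step1:
  fixes F :: "'a::euclidean_space \<Rightarrow> ennreal" and r :: real
  assumes F[measurable]: "F \<in> borel_measurable borel" and r: "r > 0"
  shows "(\<integral>\<^sup>+x. indicator (ball 0 r) x * F ((r / norm x) *\<^sub>R x) \<partial>lborel)
       = ennreal (r ^ DIM('a)) * (\<integral>\<^sup>+y. indicator (ball 0 1) y * F ((r / norm y) *\<^sub>R y) \<partial>lborel)"
proof -
  have "(\<integral>\<^sup>+x. indicator (ball 0 r) x * F ((r / norm x) *\<^sub>R x) \<partial>lborel)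
     = ennreal (r ^ DIM('a)) * (\<integral>\<^sup>+y. indicator (ball 0 r) (r *\<^sub>R y) * F ((r / norm (r *\<^sub>R y)) *\<^sub>R (r *\<^sub>R y)) \<partial>lborel)"
    by (rule nn_integral_scale[OF _ r]) measurable
  also have "(\<integral>\<^sup>+y. indicator (ball 0 r) (r *\<^sub>R y) * F ((r / norm (r *\<^sub>R y)) *\<^sub>R (r *\<^sub>R y)) \<partial>lborel)
      = (\<integral>\<^sup>+y. indicator (ball 0 1) y * F ((r / norm y) *\<^sub>R y) \<partial>lborel)"
  proof (rule nn_integral_cong)
    fix y :: 'a
    have m: "r *\<^sub>R y \<in> ball 0 r \<longleftrightarrow> y \<in> ball 0 1" using r by (simp add: abs_of_pos)
    have e: "(r / norm (r *\<^sub>R y)) *\<^sub>R (r *\<^sub>R y) = (r / norm y) *\<^sub>R y"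
      using r by (cases "y = 0") (auto simp: abs_of_pos)
    show "indicator (ball 0 r) (r *\<^sub>R y) * F ((r / norm (r *\<^sub>R y)) *\<^sub>R (r *\<^sub>R y))
        = indicator (ball 0 1) y * F ((r / norm y) *\<^sub>R y)"
      unfolding e indicator_def m ..
  qed
  finally show ?thesis .
qed

lemma polar_step3:
  fixes F :: "'a::euclidean_space \<Rightarrow> ennreal" and y :: 'a
  assumes F[measurable]: "F \<in> borel_measurable borel" and y: "y \<noteq> 0"
  shows "(\<integral>\<^sup>+r. indicator {0<..} r * ennreal (real DIM('a) * r ^ (DIM('a) - 1)) * F ((r / norm y) *\<^sub>R y) \<partial>lborel)
       = (\<integral>\<^sup>+s. ennreal (norm y ^ DIM('a)) * (indicator {0<..} s * ennreal (real DIM('a) * s ^ (DIM('a) - 1)) * F (s *\<^sub>R y)) \<partial>lborel)"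
proof -
  let ?n = "DIM('a)"
  have ny: "norm y > 0" using y by simp
  have "(\<integral>\<^sup>+r. indicator {0<..} r * ennreal (real ?n * r ^ (?n - 1)) * F ((r / norm y) *\<^sub>R y) \<partial>lborel)
     = ennreal \<bar>norm y\<bar> * (\<integral>\<^sup>+s. indicator {0<..} (0 + norm y * s) * ennreal (real ?n * (0 + norm y * s) ^ (?n - 1)) * F (((0 + norm y * s) / norm y) *\<^sub>R y) \<partial>lborel)"
    using ny by (intro nn_integral_real_affine) auto
  also have "\<dots> = (\<integral>\<^sup>+s. ennreal (norm y) * (indicator {0<..} (0 + norm y * s) * ennreal (real ?n * (0 + norm y * s) ^ (?n - 1)) * F (((0 + norm y * s) / norm y) *\<^sub>R y)) \<partial>lborel)"
    by (subst nn_integral_cmult) auto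
  also have "\<dots> = (\<integral>\<^sup>+s. ennreal (norm y ^ ?n) * (indicator {0<..} s * ennreal (real ?n * s ^ (?n - 1)) * F (s *\<^sub>R y)) \<partial>lborel)"
  proof (rule nn_integral_cong)
    fix s :: real
    show "ennreal (norm y) * (indicator {0<..} (0 + norm y * s) * ennreal (real ?n * (0 + norm y * s) ^ (?n - 1)) * F (((0 + norm y * s) / norm y) *\<^sub>R y))
      = ennreal (norm y ^ ?n) * (indicator {0<..} s * ennreal (real ?n * s ^ (?n - 1)) * F (s *\<^sub>R y))"
    proof (cases "s > 0")
      case True
      have n1: "?n \<ge> 1" by (simp add: DIM_positive Suc_leI)
      have "norm y * (real ?n * (norm y * s) ^ (?n - 1)) = norm y ^ ?n * (real ?n * s ^ (?n - 1))"
        using n1 by (simp add: power_mult_distrib algebra_simps power_eq_if[of "norm y" ?n])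
      then have "ennreal (norm y) * ennreal (real ?n * (norm y * s) ^ (?n - 1)) = ennreal (norm y ^ ?n) * ennreal (real ?n * s ^ (?n - 1))"
        using True ny by (simp add: ennreal_mult[symmetric])
      moreover have "(norm y * s / norm y) = s" using ny by simp
      ultimately show ?thesis using True ny by (simp add: indicator_def mult.assoc[symmetric])
    next
      case False
      then have "\<not> (norm y * s > 0)" using ny by (simp add: zero_less_mult_iff)
      then show ?thesis using False by (simp add: indicator_def)
    qed
  qed
  finally show ?thesis by simp
qed

lemma polar_step5:
  fixes F :: "'a::euclidean_space \<Rightarrow> ennreal" and s :: real
  assumes F[measurable]: "F \<in> borel_measurable borel" and s: "s > 0"
  shows "(\<integral>\<^sup>+y. indicator (ball 0 1) y * ennreal (norm y ^ DIM('a)) * F (s *\<^sub>R y) \<partial>lborel)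
       = ennreal (1 / s ^ (2 * DIM('a))) * (\<integral>\<^sup>+x. indicator (ball 0 s) x * ennreal (norm x ^ DIM('a)) * F x \<partial>lborel)"
proof -
  let ?n = "DIM('a)"
  let ?X = "(\<integral>\<^sup>+y. indicator (ball 0 1) y * ennreal (norm y ^ ?n) * F (s *\<^sub>R y) \<partial>lborel)"
  have "(\<integral>\<^sup>+x. indicator (ball 0 s) x * ennreal (norm x ^ ?n) * F x \<partial>lborel)
      = ennreal (s ^ ?n) * (\<integral>\<^sup>+y. indicator (ball 0 s) (s *\<^sub>R y) * ennreal (norm (s *\<^sub>R y) ^ ?n) * F (s *\<^sub>R y) \<partial>lborel)"
    by (rule nn_integral_scale[OF _ s]) measurable
  also have "(\<integral>\<^sup>+y. indicator (ball 0 s) (s *\<^sub>R y) * ennreal (norm (s *\<^sub>R y) ^ ?n) * F (s *\<^sub>R y) \<partial>lborel)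
      = (\<integral>\<^sup>+y. ennreal (s ^ ?n) * (indicator (ball 0 1) y * ennreal (norm y ^ ?n) * F (s *\<^sub>R y)) \<partial>lborel)"
  proof (rule nn_integral_cong)
    fix y :: 'a
    have m: "s *\<^sub>R y \<in> ball 0 s \<longleftrightarrow> y \<in> ball 0 1" using s by (simp add: abs_of_pos)
    have e: "ennreal (norm (s *\<^sub>R y) ^ ?n) = ennreal (s ^ ?n) * ennreal (norm y ^ ?n)"
      using s by (simp add: ennreal_mult[symmetric] power_mult_distrib abs_of_pos)
    show "indicator (ball 0 s) (s *\<^sub>R y) * ennreal (norm (s *\<^sub>R y) ^ ?n) * F (s *\<^sub>R y)
        = ennreal (s ^ ?n) * (indicator (ball 0 1) y * ennreal (norm y ^ ?n) * F (s *\<^sub>R y))"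
      unfolding e indicator_def m by (simp add: mult_ac)
  qed
  also have "\<dots> = ennreal (s ^ ?n) * ?X"
    by (subst nn_integral_cmult) auto
  finally have eq: "(\<integral>\<^sup>+x. indicator (ball 0 s) x * ennreal (norm x ^ ?n) * F x \<partial>lborel)
      = ennreal (s ^ (2 * ?n)) * ?X"
    using s by (simp add: mult.assoc[symmetric] ennreal_mult[symmetric] power_add[symmetric] mult_2)
  have "ennreal (1 / s ^ (2 * ?n)) * ennreal (s ^ (2 * ?n)) = 1"
    using s by (simp add: ennreal_mult[symmetric])
  then show ?thesis unfolding eq by (simp add: mult.assoc[symmetric])
qed

lemma polar_step7:
  fixes a :: real and n :: nat
  assumes a: "a > 0" and n: "n \<ge> 1"
  shows "(\<integral>\<^sup>+s. indicator {a<..} s * ennreal (real n / s ^ (n + 1)) \<partial>lborel) = ennreal (1 / a ^ n)"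
proof -
  have "(\<integral>\<^sup>+s. indicator {a<..} s * ennreal (real n / s ^ (n + 1)) \<partial>lborel)
      = (\<integral>\<^sup>+s. ennreal (real n / s ^ (n + 1)) * indicator {a..} s \<partial>lborel)"
  proof (rule nn_integral_cong_AE)
    show "AE s in lborel. indicator {a<..} s * ennreal (real n / s ^ (n + 1)) = ennreal (real n / s ^ (n + 1)) * indicator {a..} s"
      using AE_lborel_singleton[of a] by eventually_elim (auto simp: indicator_def)
  qed
  also have "\<dots> = ennreal (0 - (- inverse (a ^ n)))"
  proof (rule nn_integral_FTC_atLeast)
    show "(\<lambda>s. real n / s ^ (n + 1)) \<in> borel_measurable borel" by measurable
    show "DERIV (\<lambda>s. - inverse (s ^ n)) x :> real n / x ^ (n + 1)" if "a \<le> x" for x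
    proof -
      have x: "x \<noteq> 0" using that a by auto
      obtain m where m: "n = Suc m" using n by (cases n) auto
      have "DERIV (\<lambda>s. - inverse (s ^ n)) x :> - (- ((real n * x ^ (n - Suc 0)) * inverse ((x ^ n) ^ Suc (Suc 0))))"
        by (intro DERIV_minus DERIV_inverse_fun DERIV_pow) (use x in auto)
      moreover have "- (- ((real n * x ^ (n - Suc 0)) * inverse ((x ^ n) ^ Suc (Suc 0)))) = real n / x ^ (n + 1)"
      proof -
        have e: "(x ^ n) ^ Suc (Suc 0) = x ^ m * x ^ (n + 1)" unfolding m by (simp add: power_add[symmetric] power_mult[symmetric])
        show ?thesis unfolding e m using x by (simp add: divide_inverse)
      qed
      ultimately show ?thesis by simp
    qed
    show "0 \<le> real n / x ^ (n + 1)" if "a \<le> x" for x using that a by simp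
    have "filterlim (\<lambda>s::real. s ^ n) at_top at_top"
      using n by (intro filterlim_pow_at_top filterlim_ident) auto
    then have "((\<lambda>s::real. inverse (s ^ n)) \<longlongrightarrow> 0) at_top" by (rule tendsto_inverse_0_at_top)
    from tendsto_minus[OF this] show "((\<lambda>s::real. - inverse (s ^ n)) \<longlongrightarrow> 0) at_top" by (simp only: minus_zero)
  qed
  finally show ?thesis by (simp add: divide_inverse)
qed

lemma polar:
  fixes F :: "'a::euclidean_space \<Rightarrow> ennreal"
  assumes F[measurable]: "F \<in> borel_measurable borel"
  shows "(\<integral>\<^sup>+x. F x \<partial>lborel) = (\<integral>\<^sup>+r. indicator {0<..} r * (ennreal (real DIM('a) / r) *
           (\<integral>\<^sup>+x. indicator (ball 0 r) x * F ((r / norm x) *\<^sub>R x) \<partial>lborel)) \<partial>lborel)"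
proof -
  let ?n = "DIM('a)"
  have n1: "?n \<ge> 1" by (simp add: DIM_positive Suc_leI)
  define g1 where "g1 r y = indicator {0<..} r * ennreal (real ?n * r ^ (?n - 1)) * (indicator (ball 0 1) y * F ((r / norm y) *\<^sub>R y))" for r :: real and y :: 'a
  define g2 where "g2 s y = indicator {0<..} s * ennreal (real ?n * s ^ (?n - 1)) * (indicator (ball 0 1) y * ennreal (norm y ^ ?n) * F (s *\<^sub>R y))" for s :: real and y :: 'a
  define g3 where "g3 s x = indicator {0<..} s * ennreal (real ?n / s ^ (?n + 1)) * (indicator (ball 0 s) x * ennreal (norm x ^ ?n) * F x)" for s :: real and x :: 'a
  have [measurable]: "case_prod g1 \<in> borel_measurable (lborel \<Otimes>\<^sub>M lborel)"
    unfolding g1_def by measurable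
  have [measurable]: "case_prod g2 \<in> borel_measurable (lborel \<Otimes>\<^sub>M lborel)"
    unfolding g2_def by measurable
  have [measurable]: "case_prod g3 \<in> borel_measurable (lborel \<Otimes>\<^sub>M lborel)"
    unfolding g3_def by measurable
  have "(\<integral>\<^sup>+r. indicator {0<..} r * (ennreal (real ?n / r) *
           (\<integral>\<^sup>+x. indicator (ball 0 r) x * F ((r / norm x) *\<^sub>R x) \<partial>lborel)) \<partial>lborel)
      = (\<integral>\<^sup>+r. \<integral>\<^sup>+y. g1 r y \<partial>lborel \<partial>lborel)"
  proof (rule nn_integral_cong)
    fix r :: real
    show "indicator {0<..} r * (ennreal (real ?n / r) *
           (\<integral>\<^sup>+x. indicator (ball 0 r) x * F ((r / norm x) *\<^sub>R x) \<partial>lborel)) = (\<integral>\<^sup>+y. g1 r y \<partial>lborel)"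
    proof (cases "r > 0")
      case True
      have e: "ennreal (real ?n / r) * ennreal (r ^ ?n) = ennreal (real ?n * r ^ (?n - 1))"
      proof -
        have "real ?n / r * r ^ ?n = real ?n * r ^ (?n - 1)"
          using True n1 by (simp add: power_eq_if[of r ?n])
        then show ?thesis using True by (simp add: ennreal_mult[symmetric])
      qed
      have "(\<integral>\<^sup>+y. g1 r y \<partial>lborel) = ennreal (real ?n * r ^ (?n - 1)) * (\<integral>\<^sup>+y. indicator (ball 0 1) y * F ((r / norm y) *\<^sub>R y) \<partial>lborel)"
        unfolding g1_def using True by (subst nn_integral_cmult[symmetric]) auto
      then show ?thesis unfolding polar_step1[OF F True] using True
        by (simp add: mult.assoc[symmetric] e)
    next
      case False
      then show ?thesis by (simp add: g1_def)
    qed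
  qed
  also have "\<dots> = (\<integral>\<^sup>+y. \<integral>\<^sup>+r. g1 r y \<partial>lborel \<partial>lborel)"
    by (rule lborel_pair.Fubini'[symmetric]) measurable
  also have "\<dots> = (\<integral>\<^sup>+y. \<integral>\<^sup>+s. g2 s y \<partial>lborel \<partial>lborel)"
  proof (rule nn_integral_cong_AE)
    show "AE y in lborel. (\<integral>\<^sup>+r. g1 r y \<partial>lborel) = (\<integral>\<^sup>+s. g2 s y \<partial>lborel)"
      using AE_lborel_singleton[of 0]
    proof eventually_elim
      case (elim y)
      have "(\<integral>\<^sup>+r. g1 r y \<partial>lborel) = indicator (ball 0 1) y * (\<integral>\<^sup>+r. indicator {0<..} r * ennreal (real ?n * r ^ (?n - 1)) * F ((r / norm y) *\<^sub>R y) \<partial>lborel)"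
        unfolding g1_def by (subst nn_integral_cmult[symmetric]) (auto simp: mult_ac)
      also have "\<dots> = indicator (ball 0 1) y * (\<integral>\<^sup>+s. ennreal (norm y ^ ?n) * (indicator {0<..} s * ennreal (real ?n * s ^ (?n - 1)) * F (s *\<^sub>R y)) \<partial>lborel)"
        unfolding polar_step3[OF F elim] ..
      also have "\<dots> = (\<integral>\<^sup>+s. g2 s y \<partial>lborel)"
        unfolding g2_def by (subst nn_integral_cmult[symmetric]) (auto simp: mult_ac)
      finally show ?case .
    qed
  qed
  also have "\<dots> = (\<integral>\<^sup>+s. \<integral>\<^sup>+y. g2 s y \<partial>lborel \<partial>lborel)"
    by (rule lborel_pair.Fubini') measurable
  also have "\<dots> = (\<integral>\<^sup>+s. \<integral>\<^sup>+x. g3 s x \<partial>lborel \<partial>lborel)"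
  proof (rule nn_integral_cong)
    fix s :: real
    show "(\<integral>\<^sup>+y. g2 s y \<partial>lborel) = (\<integral>\<^sup>+x. g3 s x \<partial>lborel)"
    proof (cases "s > 0")
      case True
      have e: "ennreal (real ?n * s ^ (?n - 1)) * ennreal (1 / s ^ (2 * ?n)) = ennreal (real ?n / s ^ (?n + 1))"
      proof -
        have "(?n - 1) + (?n + 1) = 2 * ?n" using n1 by simp
        then have "s ^ (?n - 1) * s ^ (?n + 1) = s ^ (2 * ?n)" by (metis power_add)
        then have "real ?n * s ^ (?n - 1) * (1 / s ^ (2 * ?n)) = real ?n / s ^ (?n + 1)"
          using True by (simp add: field_simps)
        then show ?thesis using True by (simp add: ennreal_mult[symmetric])
      qed
      have "(\<integral>\<^sup>+y. g2 s y \<partial>lborel) = indicator {0<..} s * ennreal (real ?n * s ^ (?n - 1)) *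
          (\<integral>\<^sup>+y. indicator (ball 0 1) y * ennreal (norm y ^ ?n) * F (s *\<^sub>R y) \<partial>lborel)"
        unfolding g2_def by (subst nn_integral_cmult) auto
      also have "\<dots> = indicator {0<..} s * ennreal (real ?n * s ^ (?n - 1)) * ennreal (1 / s ^ (2 * ?n)) *
          (\<integral>\<^sup>+x. indicator (ball 0 s) x * ennreal (norm x ^ ?n) * F x \<partial>lborel)"
        unfolding polar_step5[OF F True] by (simp add: mult.assoc)
      also have "\<dots> = indicator {0<..} s * ennreal (real ?n / s ^ (?n + 1)) *
          (\<integral>\<^sup>+x. indicator (ball 0 s) x * ennreal (norm x ^ ?n) * F x \<partial>lborel)"
        by (simp only: e[symmetric] mult.assoc)
      also have "\<dots> = (\<integral>\<^sup>+x. g3 s x \<partial>lborel)"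
        unfolding g3_def by (subst nn_integral_cmult) auto
      finally show ?thesis .
    next
      case False
      then show ?thesis by (simp add: g2_def g3_def)
    qed
  qed
  also have "\<dots> = (\<integral>\<^sup>+x. \<integral>\<^sup>+s. g3 s x \<partial>lborel \<partial>lborel)"
    by (rule lborel_pair.Fubini'[symmetric]) measurable
  also have "\<dots> = (\<integral>\<^sup>+x. F x \<partial>lborel)"
  proof (rule nn_integral_cong_AE)
    show "AE x in lborel. (\<integral>\<^sup>+s. g3 s x \<partial>lborel) = F x"
      using AE_lborel_singleton[of 0]
    proof eventually_elim
      case (elim x)
      have nx: "norm x > 0" using elim by simp
      have "(\<integral>\<^sup>+s. g3 s x \<partial>lborel) = (\<integral>\<^sup>+s. (ennreal (norm x ^ ?n) * F x) * (indicator {norm x<..} s * ennreal (real ?n / s ^ (?n + 1))) \<partial>lborel)"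
      proof (rule nn_integral_cong)
        fix s :: real
        have "indicator {0<..} s * (indicator (ball 0 s) x :: ennreal) = indicator {norm x<..} s"
          using nx by (auto simp: indicator_def) (meson norm_ge_zero le_less_trans)
        then show "g3 s x = (ennreal (norm x ^ ?n) * F x) * (indicator {norm x<..} s * ennreal (real ?n / s ^ (?n + 1)))"
          unfolding g3_def by (metis (no_types, lifting) mult.assoc mult.commute)
      qed
      also have "\<dots> = (ennreal (norm x ^ ?n) * F x) * ennreal (1 / norm x ^ ?n)"
        by (subst nn_integral_cmult) (measurable, simp only: polar_step7[OF nx n1])
      also have "\<dots> = F x"
      proof -
        have "ennreal (norm x ^ ?n) * ennreal (1 / norm x ^ ?n) = 1"
          using nx by (simp add: ennreal_mult[symmetric])
        then show ?thesis by (metis mult.assoc mult.commute mult_1)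
      qed
      finally show ?case .
    qed
  qed
  finally show ?thesis ..
qed

definition Tn :: "('a::euclidean_space \<Rightarrow> real) \<Rightarrow> real \<Rightarrow> ennreal" where
  "Tn v r = (\<integral>\<^sup>+x. indicator (ball 0 r) x * ennreal \<bar>v ((r / norm x) *\<^sub>R x)\<bar> \<partial>lborel)"

lemma Tn_meas[measurable]:
  fixes v :: "'a::euclidean_space \<Rightarrow> real"
  assumes [measurable]: "v \<in> borel_measurable borel"
  shows "Tn v \<in> borel_measurable borel"
proof -
  have "(\<lambda>r. \<integral>\<^sup>+x. indicator (ball 0 r) x * ennreal \<bar>v ((r / norm x) *\<^sub>R x)\<bar> \<partial>lborel) \<in> borel_measurable lborel"
    by measurable
  then show ?thesis unfolding Tn_def[abs_def] by simp
qed

lemma S_eq: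
  fixes v :: "'a::euclidean_space \<Rightarrow> real"
  assumes [measurable]: "v \<in> borel_measurable borel"
  shows "sphere_int_abs v r = real DIM('a) / r * enn2real (Tn v r)"
proof -
  have m: "(\<lambda>x. indicator (ball 0 r) x *\<^sub>R \<bar>v ((r / norm x) *\<^sub>R x)\<bar>) \<in> borel_measurable lborel"
    by measurable
  have "(\<integral>x\<in>ball 0 r. \<bar>v ((r / norm x) *\<^sub>R x)\<bar> \<partial>lebesgue)
      = integral\<^sup>L lborel (\<lambda>x. indicator (ball 0 r) x *\<^sub>R \<bar>v ((r / norm x) *\<^sub>R x)\<bar>)"
    unfolding set_lebesgue_integral_def by (rule integral_completion) (use m in simp)
  also have "\<dots> = enn2real (\<integral>\<^sup>+x. ennreal (indicator (ball 0 r) x *\<^sub>R \<bar>v ((r / norm x) *\<^sub>R x)\<bar>) \<partial>lborel)"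
    by (rule integral_eq_nn_integral) (use m in auto)
  also have "(\<integral>\<^sup>+x. ennreal (indicator (ball 0 r) x *\<^sub>R \<bar>v ((r / norm x) *\<^sub>R x)\<bar>) \<partial>lborel) = Tn v r"
    unfolding Tn_def by (intro nn_integral_cong) (auto simp: indicator_def)
  finally show ?thesis unfolding sphere_int_abs_def by simp
qed

lemma S_meas:
  fixes v :: "'a::euclidean_space \<Rightarrow> real"
  assumes [measurable]: "v \<in> borel_measurable borel"
  shows "sphere_int_abs v \<in> borel_measurable borel"
  unfolding S_eq[OF assms, abs_def] by measurable

lemma energy_polar:
  fixes v :: "'a::euclidean_space \<Rightarrow> real" and \<psi> :: "real \<Rightarrow> real"
  assumes [measurable]: "v \<in> borel_measurable borel" "\<psi> \<in> borel_measurable borel"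
    and psi0: "\<And>r. \<psi> r \<ge> 0"
  shows "(\<integral>\<^sup>+x. ennreal (\<bar>v x\<bar> * \<psi> (norm x)) \<partial>lborel)
       = (\<integral>\<^sup>+r. indicator {0<..} r * ennreal (\<psi> r) * (ennreal (real DIM('a) / r) * Tn v r) \<partial>lborel)"
proof -
  have "(\<integral>\<^sup>+x. ennreal (\<bar>v x\<bar> * \<psi> (norm x)) \<partial>lborel)
     = (\<integral>\<^sup>+r. indicator {0<..} r * (ennreal (real DIM('a) / r) *
           (\<integral>\<^sup>+x. indicator (ball 0 r) x * ennreal (\<bar>v ((r / norm x) *\<^sub>R x)\<bar> * \<psi> (norm ((r / norm x) *\<^sub>R x))) \<partial>lborel)) \<partial>lborel)"
    by (rule polar) measurable
  also have "\<dots> = (\<integral>\<^sup>+r. indicator {0<..} r * ennreal (\<psi> r) * (ennreal (real DIM('a) / r) * Tn v r) \<partial>lborel)"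
  proof (rule nn_integral_cong)
    fix r :: real
    show "indicator {0<..} r * (ennreal (real DIM('a) / r) *
           (\<integral>\<^sup>+x. indicator (ball 0 r) x * ennreal (\<bar>v ((r / norm x) *\<^sub>R x)\<bar> * \<psi> (norm ((r / norm x) *\<^sub>R x))) \<partial>lborel))
        = indicator {0<..} r * ennreal (\<psi> r) * (ennreal (real DIM('a) / r) * Tn v r)"
    proof (cases "r > 0")
      case True
      have "(\<integral>\<^sup>+x. indicator (ball 0 r) x * ennreal (\<bar>v ((r / norm x) *\<^sub>R x)\<bar> * \<psi> (norm ((r / norm x) *\<^sub>R x))) \<partial>lborel)
          = (\<integral>\<^sup>+x. ennreal (\<psi> r) * (indicator (ball 0 r) x * ennreal \<bar>v ((r / norm x) *\<^sub>R x)\<bar>) \<partial>lborel)"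
      proof (rule nn_integral_cong_AE)
        show "AE x in lborel. indicator (ball 0 r) x * ennreal (\<bar>v ((r / norm x) *\<^sub>R x)\<bar> * \<psi> (norm ((r / norm x) *\<^sub>R x)))
            = ennreal (\<psi> r) * (indicator (ball 0 r) x * ennreal \<bar>v ((r / norm x) *\<^sub>R x)\<bar>)"
          using AE_lborel_singleton[of 0]
        proof eventually_elim
          case (elim x)
          have "norm ((r / norm x) *\<^sub>R x) = r" using elim True by simp
          then show ?case using psi0[of r] by (simp add: ennreal_mult mult_ac)
        qed
      qed
      also have "\<dots> = ennreal (\<psi> r) * Tn v r"
        unfolding Tn_def by (rule nn_integral_cmult) measurable
      finally show ?thesis by (simp add: mult_ac)
    qed simp
  qed
  finally show ?thesis .
qed

lemma S_nonneg:
  fixes v :: "'a::euclidean_space \<Rightarrow> real"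
  assumes "v \<in> borel_measurable borel" "r > 0"
  shows "sphere_int_abs v r \<ge> 0"
  unfolding S_eq[OF assms(1)] using assms(2) by simp

lemma S_AE:
  fixes v :: "'a::euclidean_space \<Rightarrow> real" and \<rho> \<sigma> :: real
  assumes vm[measurable]: "v \<in> borel_measurable borel"
    and vi: "set_integrable lebesgue (ball 0 \<sigma>) v"
    and r: "0 < \<rho>" "\<rho> < \<sigma>"
  shows "AE r in lborel. r \<in> {\<rho>..<\<sigma>} \<longrightarrow> ennreal (real DIM('a) / r) * Tn v r = ennreal (sphere_int_abs v r)"
    and "(\<integral>\<^sup>+r. indicator {\<rho>..<\<sigma>} r * ennreal (sphere_int_abs v r) \<partial>lborel) < \<infinity>"
proof -
  let ?n = "DIM('a)"
  have "integrable lebesgue (\<lambda>x. indicator (ball 0 \<sigma>) x *\<^sub>R v x)"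
    using vi unfolding set_integrable_def .
  then have "integrable lborel (\<lambda>x. indicator (ball 0 \<sigma>) x *\<^sub>R v x)"
    by (subst integrable_completion[symmetric]) measurable
  then have fin: "(\<integral>\<^sup>+x. ennreal (norm (indicator (ball 0 \<sigma>) x *\<^sub>R v x)) \<partial>lborel) < \<infinity>"
    by (simp add: integrable_iff_bounded)
  let ?psi = "\<lambda>r::real. indicator {\<rho>..<\<sigma>} r :: real"
  have "(\<integral>\<^sup>+x. ennreal (\<bar>v x\<bar> * ?psi (norm x)) \<partial>lborel) \<le> (\<integral>\<^sup>+x. ennreal (norm (indicator (ball 0 \<sigma>) x *\<^sub>R v x)) \<partial>lborel)"
    by (intro nn_integral_mono) (auto simp: indicator_def)
  also note fin
  finally have fin2: "(\<integral>\<^sup>+x. ennreal (\<bar>v x\<bar> * ?psi (norm x)) \<partial>lborel) < \<infinity>" .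
  have eq: "(\<integral>\<^sup>+x. ennreal (\<bar>v x\<bar> * ?psi (norm x)) \<partial>lborel)
       = (\<integral>\<^sup>+r. indicator {0<..} r * ennreal (?psi r) * (ennreal (real ?n / r) * Tn v r) \<partial>lborel)"
    by (rule energy_polar) (auto simp: indicator_def)
  have fin3: "(\<integral>\<^sup>+r. indicator {0<..} r * ennreal (?psi r) * (ennreal (real ?n / r) * Tn v r) \<partial>lborel) \<noteq> \<infinity>"
    using fin2 unfolding eq by simp
  have "AE r in lborel. indicator {0<..} r * ennreal (?psi r) * (ennreal (real ?n / r) * Tn v r) \<noteq> \<infinity>"
    by (rule nn_integral_noteq_infinite[OF _ fin3]) measurable
  then show AE: "AE r in lborel. r \<in> {\<rho>..<\<sigma>} \<longrightarrow> ennreal (real ?n / r) * Tn v r = ennreal (sphere_int_abs v r)"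
  proof eventually_elim
    case (elim r)
    show ?case
    proof
      assume rI: "r \<in> {\<rho>..<\<sigma>}"
      then have rpos: "r > 0" using r by auto
      have "ennreal (real ?n / r) * Tn v r \<noteq> \<infinity>" using elim rI rpos by (simp add: indicator_def)
      then have Tfin: "Tn v r \<noteq> \<infinity>" using rpos by (auto simp: ennreal_mult_eq_top_iff)
      have "ennreal (sphere_int_abs v r) = ennreal (real ?n / r) * ennreal (enn2real (Tn v r))"
        unfolding S_eq[OF vm] by (rule ennreal_mult) (use rpos in auto)
      also have "\<dots> = ennreal (real ?n / r) * Tn v r" using Tfin by (simp add: ennreal_enn2real_if)
      finally show "ennreal (real ?n / r) * Tn v r = ennreal (sphere_int_abs v r)" by simp
    qed
  qed
  have "(\<integral>\<^sup>+r. indicator {\<rho>..<\<sigma>} r * ennreal (sphere_int_abs v r) \<partial>lborel)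
      = (\<integral>\<^sup>+r. indicator {0<..} r * ennreal (?psi r) * (ennreal (real ?n / r) * Tn v r) \<partial>lborel)"
  proof (rule nn_integral_cong_AE)
    show "AE r in lborel. indicator {\<rho>..<\<sigma>} r * ennreal (sphere_int_abs v r) = indicator {0<..} r * ennreal (?psi r) * (ennreal (real ?n / r) * Tn v r)"
      using AE
    proof eventually_elim
      case (elim r)
      show ?case
      proof (cases "r \<in> {\<rho>..<\<sigma>}")
        case True
        then have "r > 0" using r by auto
        then show ?thesis using True elim by (simp add: indicator_def)
      qed (auto simp: indicator_def)
    qed
  qed
  then show "(\<integral>\<^sup>+r. indicator {\<rho>..<\<sigma>} r * ennreal (sphere_int_abs v r) \<partial>lborel) < \<infinity>"
    using fin3 by (simp add: top.not_eq_extremum)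
qed

lemma S_int:
  fixes v :: "'a::euclidean_space \<Rightarrow> real" and \<rho> \<sigma> :: real
  assumes vm[measurable]: "v \<in> borel_measurable borel"
    and vi: "set_integrable lebesgue (ball 0 \<sigma>) v"
    and r: "0 < \<rho>" "\<rho> < \<sigma>"
  shows "set_integrable lborel {\<rho>..\<sigma>} (sphere_int_abs v)"
proof -
  have Sm[measurable]: "sphere_int_abs v \<in> borel_measurable borel" by (rule S_meas[OF vm])
  have "(\<integral>\<^sup>+r. ennreal (norm (indicator {\<rho>..\<sigma>} r *\<^sub>R sphere_int_abs v r)) \<partial>lborel)
      = (\<integral>\<^sup>+r. indicator {\<rho>..<\<sigma>} r * ennreal (sphere_int_abs v r) \<partial>lborel)"
  proof (rule nn_integral_cong_AE)
    show "AE x in lborel. ennreal (norm (indicator {\<rho>..\<sigma>} x *\<^sub>R sphere_int_abs v x)) = indicator {\<rho>..<\<sigma>} x * ennreal (sphere_int_abs v x)"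
      using AE_lborel_singleton[of \<sigma>]
    proof eventually_elim
      case (elim x)
      show ?case
      proof (cases "x \<in> {\<rho>..\<sigma>}")
        case True
        then have "sphere_int_abs v x \<ge> 0" using r by (intro S_nonneg[OF vm]) auto
        then show ?thesis using True elim by (simp add: indicator_def)
      qed (auto simp: indicator_def)
    qed
  qed
  also have "\<dots> < \<infinity>" by (rule S_AE(2)[OF vm vi r])
  finally show ?thesis unfolding set_integrable_def
    by (intro integrableI_bounded) measurable
qed

lemma energy_identity:
  fixes v :: "'a::euclidean_space \<Rightarrow> real" and \<rho> \<sigma> :: real and \<psi> :: "real \<Rightarrow> real"
  assumes vm[measurable]: "v \<in> borel_measurable borel"
    and vi: "set_integrable lebesgue (ball 0 \<sigma>) v"
    and r: "0 < \<rho>" "\<rho> < \<sigma>"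
    and pm[measurable]: "\<psi> \<in> borel_measurable borel"
    and p0: "\<And>r. \<psi> r \<ge> 0"
    and psupp: "\<And>r. r \<notin> {\<rho>..<\<sigma>} \<Longrightarrow> \<psi> r = 0"
  shows "(\<integral>x\<in>ball 0 \<sigma>. \<bar>v x\<bar> * \<psi> (norm x) \<partial>lebesgue) = (LINT r:{\<rho>..\<sigma>}|lborel. \<psi> r * sphere_int_abs v r)"
proof -
  let ?n = "DIM('a)"
  have Sm[measurable]: "sphere_int_abs v \<in> borel_measurable borel" by (rule S_meas[OF vm])
  have "(\<integral>x\<in>ball 0 \<sigma>. \<bar>v x\<bar> * \<psi> (norm x) \<partial>lebesgue)
      = integral\<^sup>L lborel (\<lambda>x. indicator (ball 0 \<sigma>) x *\<^sub>R (\<bar>v x\<bar> * \<psi> (norm x)))"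
    unfolding set_lebesgue_integral_def by (rule integral_completion) measurable
  also have "\<dots> = integral\<^sup>L lborel (\<lambda>x. \<bar>v x\<bar> * \<psi> (norm x))"
  proof (rule Bochner_Integration.integral_cong[OF refl])
    fix x :: 'a
    show "indicator (ball 0 \<sigma>) x *\<^sub>R (\<bar>v x\<bar> * \<psi> (norm x)) = \<bar>v x\<bar> * \<psi> (norm x)"
      using psupp[of "norm x"] by (auto simp: indicator_def)
  qed
  also have "\<dots> = enn2real (\<integral>\<^sup>+x. ennreal (\<bar>v x\<bar> * \<psi> (norm x)) \<partial>lborel)"
    by (rule integral_eq_nn_integral) (use p0 in auto)
  also have "(\<integral>\<^sup>+x. ennreal (\<bar>v x\<bar> * \<psi> (norm x)) \<partial>lborel)
       = (\<integral>\<^sup>+r. indicator {0<..} r * ennreal (\<psi> r) * (ennreal (real ?n / r) * Tn v r) \<partial>lborel)"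
    by (rule energy_polar[OF vm pm p0])
  also have "\<dots> = (\<integral>\<^sup>+r. ennreal (indicator {\<rho>..\<sigma>} r *\<^sub>R (\<psi> r * sphere_int_abs v r)) \<partial>lborel)"
  proof (rule nn_integral_cong_AE)
    show "AE r in lborel. indicator {0<..} r * ennreal (\<psi> r) * (ennreal (real ?n / r) * Tn v r)
        = ennreal (indicator {\<rho>..\<sigma>} r *\<^sub>R (\<psi> r * sphere_int_abs v r))"
      using S_AE(1)[OF vm vi r]
    proof eventually_elim
      case (elim r)
      show ?case
      proof (cases "r \<in> {\<rho>..<\<sigma>}")
        case True
        then have rpos: "r > 0" using r by auto
        have Sn: "sphere_int_abs v r \<ge> 0" by (rule S_nonneg[OF vm rpos])
        have "indicator {0<..} r * ennreal (\<psi> r) * (ennreal (real ?n / r) * Tn v r) = ennreal (\<psi> r) * ennreal (sphere_int_abs v r)"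
          using True rpos elim by (simp add: indicator_def)
        also have "\<dots> = ennreal (indicator {\<rho>..\<sigma>} r *\<^sub>R (\<psi> r * sphere_int_abs v r))"
          using True Sn p0[of r] by (simp add: indicator_def ennreal_mult)
        finally show ?thesis .
      next
        case False
        then show ?thesis using psupp[OF False] by simp
      qed
    qed
  qed
  also have "enn2real \<dots> = integral\<^sup>L lborel (\<lambda>r. indicator {\<rho>..\<sigma>} r *\<^sub>R (\<psi> r * sphere_int_abs v r))"
  proof (rule integral_eq_nn_integral[symmetric])
    show "(\<lambda>r. indicator {\<rho>..\<sigma>} r *\<^sub>R (\<psi> r * sphere_int_abs v r)) \<in> borel_measurable lborel" by measurable
    show "AE r in lborel. 0 \<le> indicator {\<rho>..\<sigma>} r *\<^sub>R (\<psi> r * sphere_int_abs v r)"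
    proof (intro AE_I2)
      fix x show "0 \<le> indicator {\<rho>..\<sigma>} x *\<^sub>R (\<psi> x * sphere_int_abs v x)"
      proof (cases "x \<in> {\<rho>..\<sigma>}")
        case True then have "x > 0" using r by auto
        then show ?thesis using True S_nonneg[OF vm, of x] p0[of x] by simp
      qed simp
    qed
  qed
  finally show ?thesis unfolding set_lebesgue_integral_def .
qed

lemma construct_eta:
  fixes k :: "real \<Rightarrow> real" and \<rho> \<sigma> a b c :: real
  assumes kc: "continuous_on UNIV k" and k0: "\<forall>x. 0 \<le> k x" and ks: "\<forall>x. x \<notin> {a..b} \<longrightarrow> k x = 0"
    and ra: "\<rho> < a" and bs: "b < \<sigma>" and r0: "0 < \<rho>" and rs: "\<rho> < \<sigma>"
    and cdef: "c = integral {\<rho>..\<sigma>} k" and cpos: "c > 0"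
  obtains \<eta> :: "'a::euclidean_space \<Rightarrow> real" where "\<eta> \<in> C1_0 (ball 0 \<sigma>)" "\<forall>x. \<eta> x \<ge> 0"
    "\<forall>x\<in>ball 0 \<rho>. \<eta> x = 1" "\<forall>x. (norm (grad \<eta> x))\<^sup>2 = (k (norm x) / c)\<^sup>2"
proof -
  define \<Phi> where "\<Phi> t = integral {\<rho>..t} k" for t
  define \<phi> where "\<phi> t = 1 - \<Phi> t / c" for t
  define d\<phi> where "d\<phi> t = - k t / c" for t
  define \<eta> :: "'a \<Rightarrow> real" where "\<eta> x = \<phi> (norm x)" for x
  define g :: "'a \<Rightarrow> 'a" where "g x = (d\<phi> (norm x) / norm x) *\<^sub>R x" for x
  have kint: "k integrable_on {p..q}" for p q
    by (rule integrable_continuous_real) (rule continuous_on_subset[OF kc], simp)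
  have kz: "k x = 0" if "x < a \<or> x > b" for x using ks that by auto
  have ab: "a \<le> b"
  proof (rule ccontr)
    assume "\<not> a \<le> b"
    then have "\<forall>x. k x = 0" using ks by auto
    then have "k = (\<lambda>_. 0)" by auto
    then have "c = 0" unfolding cdef by simp
    then show False using cpos by simp
  qed
  have Phi0: "\<Phi> t = 0" if "t < a" for t
  proof -
    have "\<Phi> t = integral {\<rho>..t} (\<lambda>_. 0::real)"
      unfolding \<Phi>_def by (rule integral_cong) (use that kz in auto)
    then show ?thesis by simp
  qed
  have Phic: "\<Phi> t = c" if "t > b" for t
  proof (cases "t \<ge> \<sigma>")
    case True
    have "integral {\<rho>..\<sigma>} k + integral {\<sigma>..t} k = integral {\<rho>..t} k"
      by (rule Henstock_Kurzweil_Integration.integral_combine) (use True ra bs r0 rs kint in auto)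
    moreover have "integral {\<sigma>..t} k = integral {\<sigma>..t} (\<lambda>_. 0::real)"
      by (rule integral_cong) (use bs kz in auto)
    ultimately show ?thesis unfolding \<Phi>_def cdef by simp
  next
    case False
    have "integral {\<rho>..t} k + integral {t..\<sigma>} k = integral {\<rho>..\<sigma>} k"
      by (rule Henstock_Kurzweil_Integration.integral_combine) (use False that ra bs r0 ab kint in auto)
    moreover have "integral {t..\<sigma>} k = integral {t..\<sigma>} (\<lambda>_. 0::real)"
      by (rule integral_cong) (use that kz in auto)
    ultimately show ?thesis unfolding \<Phi>_def cdef by simp
  qed
  have Phile: "\<Phi> t \<le> c" for t
  proof (cases "t < a")
    case True then show ?thesis using Phi0 cpos by simp
  next
    case ta: False
    show ?thesis
    proof (cases "t > b")
      case True then show ?thesis using Phic by simp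
    next
      case False
      have "integral {\<rho>..t} k + integral {t..\<sigma>} k = integral {\<rho>..\<sigma>} k"
        by (rule Henstock_Kurzweil_Integration.integral_combine) (use False ta ra bs r0 kint in auto)
      moreover have "integral {t..\<sigma>} k \<ge> 0"
        by (rule integral_nonneg) (use kint k0 in auto)
      ultimately show ?thesis unfolding \<Phi>_def cdef by simp
    qed
  qed
  have Phid: "(\<Phi> has_real_derivative k t) (at t)" for t
  proof (cases "t < a")
    case True
    have "((\<lambda>_. 0::real) has_real_derivative 0) (at t)" by (rule DERIV_const)
    then have "((\<lambda>_. 0::real) has_real_derivative k t) (at t)" using kz True by simp
    then show ?thesis
      by (rule has_field_derivative_transform_within_open[where S="{..<a}"]) (use True Phi0 in auto)
  next
    case False
    then have tr: "\<rho> < t" using ra by simp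
    have "((\<lambda>u. integral {\<rho>..u} k) has_vector_derivative k t) (at t within {\<rho>..t+1})"
      by (rule integral_has_vector_derivative) (use tr in \<open>auto intro: continuous_on_subset[OF kc]\<close>)
    then have "((\<lambda>u. integral {\<rho>..u} k) has_vector_derivative k t) (at t)"
      using at_within_Icc_at[of \<rho> t "t+1"] tr by simp
    then show ?thesis unfolding \<Phi>_def has_real_derivative_iff_has_vector_derivative .
  qed
  have phid: "(\<phi> has_real_derivative d\<phi> t) (at t)" for t
  proof -
    have "((\<lambda>t. 1 - \<Phi> t / c) has_real_derivative 0 - k t / c) (at t)"
      by (intro DERIV_diff DERIV_const DERIV_cdivide Phid)
    then show ?thesis unfolding \<phi>_def[abs_def] d\<phi>_def by simp
  qed
  have phi1: "\<phi> t = 1" if "t < a" for t using Phi0[OF that] by (simp add: \<phi>_def)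
  have phi0: "\<phi> t = 0" if "t > b" for t using Phic[OF that] cpos by (simp add: \<phi>_def)
  have phinn: "\<phi> t \<ge> 0" for t using Phile[of t] cpos by (simp add: \<phi>_def field_simps)
  have a0: "a > 0" using ra r0 by simp
  have gz: "g x = 0" if "norm x < a" for x
    using kz[of "norm x"] that by (simp add: g_def d\<phi>_def)
  have etad: "(\<eta> has_derivative (\<lambda>h. g x \<bullet> h)) (at x)" for x
  proof (cases "x = 0")
    case True
    have "((\<lambda>_. 1::real) has_derivative (\<lambda>h. 0)) (at x)" by (rule has_derivative_const)
    then have "((\<lambda>_. 1::real) has_derivative (\<lambda>h. g x \<bullet> h)) (at x)" using True by (simp add: g_def)
    then show ?thesis
      by (rule has_derivative_transform_within_open[where s="ball 0 a"]) (use True a0 phi1 in \<open>auto simp: \<eta>_def\<close>)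
  next
    case False
    have "GDERIV (\<lambda>x. \<phi> (norm x)) x :> d\<phi> (norm x) *\<^sub>R sgn x"
      by (rule GDERIV_DERIV_compose[OF GDERIV_norm[OF False] phid])
    then have "(\<eta> has_derivative (\<lambda>h. h \<bullet> (d\<phi> (norm x) *\<^sub>R sgn x))) (at x)"
      unfolding gderiv_def \<eta>_def[abs_def] .
    moreover have "(\<lambda>h. h \<bullet> (d\<phi> (norm x) *\<^sub>R sgn x)) = (\<lambda>h. g x \<bullet> h)"
      by (simp add: g_def sgn_div_norm inner_commute divide_inverse mult.commute)
    ultimately show ?thesis by simp
  qed
  have gcont: "continuous_on UNIV g"
  proof (rule continuous_at_imp_continuous_on, intro ballI)
    fix x :: 'a
    show "isCont g x"
    proof (cases "x = 0")
      case True
      have "eventually (\<lambda>y. g y = (\<lambda>_. 0) y) (nhds x)"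
        using eventually_nhds_in_open[of "ball 0 a" x] True a0 gz by (auto elim!: eventually_mono)
      then have "isCont g x \<longleftrightarrow> isCont (\<lambda>_. 0::'a) x" by (rule isCont_cong)
      then show ?thesis by simp
    next
      case False
      have kcx: "isCont k (norm x)" using kc by (simp add: continuous_on_eq_continuous_at)
      have "continuous_on UNIV (\<lambda>y::'a. k (norm y))"
        by (rule continuous_on_compose2[OF kc]) (auto intro: continuous_intros)
      then have "isCont (\<lambda>y. k (norm y)) x" by (simp add: continuous_on_eq_continuous_at)
      moreover have "isCont (\<lambda>y. norm y) x" by (intro continuous_intros)
      ultimately have "isCont (\<lambda>y. (- k (norm y) / c / norm y) *\<^sub>R y) x" using False cpos
        by (intro continuous_intros) auto
      then show ?thesis unfolding g_def[abs_def] d\<phi>_def .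
    qed
  qed
  have C1: "\<eta> \<in> C1_0 (ball 0 \<sigma>)"
  proof -
    have sub: "{x. \<eta> x \<noteq> 0} \<subseteq> cball 0 b" using phi0 by (force simp: \<eta>_def)
    then have cl: "closure {x. \<eta> x \<noteq> 0} \<subseteq> cball 0 b" by (intro closure_minimal) auto
    have "bounded {x. \<eta> x \<noteq> 0}" using sub bounded_cball bounded_subset by blast
    then have "compact (closure {x. \<eta> x \<noteq> 0})" by simp
    moreover have "closure {x. \<eta> x \<noteq> 0} \<subseteq> ball 0 \<sigma>" using cl bs by (auto simp: subset_iff)
    ultimately show ?thesis unfolding C1_0_def using etad gcont by blast
  qed
  have gradeq: "grad \<eta> x = g x" for x
  proof -
    have "(\<eta> has_derivative (\<lambda>h. grad \<eta> x \<bullet> h)) (at x)"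
      unfolding grad_def by (rule someI_ex) (use etad in blast)
    then have "(\<lambda>h. grad \<eta> x \<bullet> h) = (\<lambda>h. g x \<bullet> h)" using etad has_derivative_unique by blast
    then have "(grad \<eta> x - g x) \<bullet> (grad \<eta> x - g x) = 0"
      by (metis inner_diff_left right_minus_eq)
    then show ?thesis by simp
  qed
  have normg: "(norm (grad \<eta> x))\<^sup>2 = (k (norm x) / c)\<^sup>2" for x
  proof (cases "x = 0")
    case True then show ?thesis using kz[of 0] a0 by (simp add: gradeq g_def)
  next
    case False
    then have "norm (g x) = \<bar>d\<phi> (norm x)\<bar>" by (simp add: g_def)
    then have "(norm (g x))\<^sup>2 = (d\<phi> (norm x))\<^sup>2" by (simp add: power2_abs)
    then show ?thesis by (simp add: gradeq d\<phi>_def power2_eq_square)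
  qed
  show ?thesis
  proof (rule that[OF C1])
    show "\<forall>x. \<eta> x \<ge> 0" using phinn by (simp add: \<eta>_def)
    show "\<forall>x\<in>ball 0 \<rho>. \<eta> x = 1" using phi1 ra by (simp add: \<eta>_def)
    show "\<forall>x. (norm (grad \<eta> x))\<^sup>2 = (k (norm x) / c)\<^sup>2" using normg by blast
  qed
qed

theorem mainTheorem4:
  fixes v :: "'a::euclidean_space \<Rightarrow> real" and \<rho> \<sigma> \<delta> :: real
  assumes "DIM('a) \<ge> 2"
    and "0 < \<rho>" and "\<rho> < \<sigma>"
    and "v \<in> borel_measurable borel"
    and "set_integrable lebesgue (ball 0 \<sigma>) v"
    and "0 < \<delta>" and "\<delta> \<le> 1"
  shows "J \<rho> \<sigma> v \<le> (\<sigma> - \<rho>) powr (-(1 + 1/\<delta>)) *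
           (\<integral>r\<in>{\<rho>..\<sigma>}. (sphere_int_abs v r) powr \<delta> \<partial>lborel) powr (1/\<delta>)"
proof -
  note r0 = assms(2) and rs = assms(3) and vm = assms(4) and vi = assms(5) and d = assms(6,7)
  have Sm: "sphere_int_abs v \<in> borel_measurable borel" by (rule S_meas[OF vm])
  have Snn: "\<forall>x\<in>{\<rho>..\<sigma>}. sphere_int_abs v x \<ge> 0"
    using r0 by (auto intro!: S_nonneg[OF vm])
  have Sint: "set_integrable lborel {\<rho>..\<sigma>} (sphere_int_abs v)" by (rule S_int[OF vm vi r0 rs])
  let ?Set = "{(\<integral>x\<in>ball 0 \<sigma>. \<bar>v x\<bar> * (norm (grad \<eta> x))\<^sup>2 \<partial>lebesgue) | \<eta>.
        \<eta> \<in> C1_0 (ball 0 \<sigma>) \<and> (\<forall>x. \<eta> x \<ge> 0) \<and> (\<forall>x\<in>ball 0 \<rho>. \<eta> x = 1)}"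
  have bdd: "bdd_below ?Set"
  proof (rule bdd_belowI[of _ 0])
    fix y assume "y \<in> ?Set"
    then obtain \<eta> :: "'a \<Rightarrow> real" where y: "y = (\<integral>x\<in>ball 0 \<sigma>. \<bar>v x\<bar> * (norm (grad \<eta> x))\<^sup>2 \<partial>lebesgue)" by blast
    show "0 \<le> y" unfolding y set_lebesgue_integral_def
      by (intro integral_nonneg_AE AE_I2) (simp add: indicator_def)
  qed
  show ?thesis
  proof (rule oneD[OF rs d Sm Snn Sint])
    fix k :: "real \<Rightarrow> real" and a b :: real
    assume kc: "continuous_on UNIV k" and k0: "\<forall>x. 0 \<le> k x" and ks: "\<forall>x. x \<notin> {a..b} \<longrightarrow> k x = 0"
      and ra: "\<rho> < a" and bs: "b < \<sigma>" and cpos: "0 < (LINT x:{\<rho>..\<sigma>}|lborel. k x)"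
    define c where "c = (LINT x:{\<rho>..\<sigma>}|lborel. k x)"
    have kcI: "continuous_on {\<rho>..\<sigma>} k" using kc by (rule continuous_on_subset) simp
    have ceq: "c = integral {\<rho>..\<sigma>} k"
      unfolding c_def by (rule set_borel_integral_eq_integral(2)[OF borel_integrable_atLeastAtMost'[OF kcI]])
    have cp: "c > 0" using cpos by (simp add: c_def)
    obtain \<eta> :: "'a \<Rightarrow> real" where e1: "\<eta> \<in> C1_0 (ball 0 \<sigma>)" and e2: "\<forall>x. \<eta> x \<ge> 0"
      and e3: "\<forall>x\<in>ball 0 \<rho>. \<eta> x = 1" and e4: "\<forall>x. (norm (grad \<eta> x))\<^sup>2 = (k (norm x) / c)\<^sup>2"
      using construct_eta[OF kc k0 ks ra bs r0 rs ceq cp] by blast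
    define \<psi> where "\<psi> r = (k r / c)\<^sup>2" for r
    have "J \<rho> \<sigma> v \<le> (\<integral>x\<in>ball 0 \<sigma>. \<bar>v x\<bar> * (norm (grad \<eta> x))\<^sup>2 \<partial>lebesgue)"
      unfolding J_def by (rule cInf_lower[OF _ bdd]) (use e1 e2 e3 in blast)
    also have "\<dots> = (\<integral>x\<in>ball 0 \<sigma>. \<bar>v x\<bar> * \<psi> (norm x) \<partial>lebesgue)"
      using e4 by (simp add: \<psi>_def)
    also have "\<dots> = (LINT r:{\<rho>..\<sigma>}|lborel. \<psi> r * sphere_int_abs v r)"
    proof (rule energy_identity[OF vm vi r0 rs])
      have "k \<in> borel_measurable borel" using kc by (rule borel_measurable_continuous_onI)
      then show "\<psi> \<in> borel_measurable borel" unfolding \<psi>_def[abs_def] by measurable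
      show "\<And>r. 0 \<le> \<psi> r" by (simp add: \<psi>_def)
      show "\<psi> r = 0" if "r \<notin> {\<rho>..<\<sigma>}" for r
        using ks that ra bs by (auto simp: \<psi>_def)
    qed
    also have "\<dots> = (LINT r:{\<rho>..\<sigma>}|lborel. (k r)\<^sup>2 * sphere_int_abs v r) / c\<^sup>2"
      by (simp add: \<psi>_def power_divide)
    finally show "J \<rho> \<sigma> v \<le> (LINT x:{\<rho>..\<sigma>}|lborel. (k x)\<^sup>2 * sphere_int_abs v x) / (LINT x:{\<rho>..\<sigma>}|lborel. k x)\<^sup>2"
      unfolding c_def .
  qed
qed

end
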